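(* Let $n\in\mathbb N$ and $c\in(0,1)$. Then, as $x\to+\infty$, $\mathbb P^T_n(x)=o(\log x)$ and $\mathbb P^T_n(x)=\omega(\log^c x)$ (i.e. $\mathbb P^T_n(x)/\log^c x\to+\infty$). In particular $\log\mathbb P^T_n(x)\sim\log\log x$.
   Context: Let $p_n$ denote the $n$-th prime number. Define $p^{(0)}_n=n$ and recursively $p^{(k+1)}_n=p_{p^{(k)}_n}$ for $k\in\mathbb N_0$. Let $\mathbb P^T_n=\{p^{(k)}_n:k\in\mathbb N\}$ and $\mathbb P^T_n(x)=\#\{a\le x: a\in\mathbb P^T_n\}$. $\log$ is the natural logarithm, $\log^c x=(\log x)^c$. *)

theory Defs
  imports Complex_Main "HOL-Library.Infinite_Set" "HOL-Library.Landau_Symbols"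
    "HOL-Computational_Algebra.Primes"
begin

text \<open>The n-th prime, 1-indexed: nth_prime 1 = 2, nth_prime 2 = 3, ...
  (the value at 0 is irrelevant, it is only applied to positive arguments).\<close>
definition nth_prime :: "nat \<Rightarrow> nat" where
  "nth_prime n = enumerate {p::nat. prime p} (n - 1)"

definition iter_prime :: "nat \<Rightarrow> nat \<Rightarrow> nat" where
  "iter_prime k n = (nth_prime ^^ k) n"

definition PT_set :: "nat \<Rightarrow> nat set" where
  "PT_set n = {iter_prime k n | k. k \<ge> 1}"

definition PT_count :: "nat \<Rightarrow> real \<Rightarrow> nat" where
  "PT_count n x = card {a \<in> PT_set n. real a \<le> x}"

end

theory Submission
  imports Defs "HOL-Real_Asymp.Real_Asymp"
begin


lemma Suc_div_split:
  fixes n d :: nat assumes "d > 0"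
  shows "Suc n div d = n div d + (if d dvd Suc n then 1 else 0)"
  using assms by (simp add: div_Suc mod_eq_0_iff_dvd)

lemma card_pow_dvd:
  fixes p m N :: nat
  assumes p: "prime p" and m: "m > 0" and N: "N \<ge> m"
  shows "card {i\<in>{1..N}. p ^ i dvd m} = multiplicity p m"
proof -
  have le: "multiplicity p m \<le> m"
  proof -
    have "p ^ multiplicity p m dvd m" by (rule multiplicity_dvd)
    hence "p ^ multiplicity p m \<le> m" using dvd_imp_le m by blast
    moreover have "multiplicity p m < 2 ^ multiplicity p m" by simp
    moreover have "2 ^ multiplicity p m \<le> p ^ multiplicity p m"
      by (rule power_mono) (use prime_ge_2_nat[OF p] in auto)
    ultimately show ?thesis by linarith
  qed
  have p1: "\<not> is_unit p" using prime_gt_1_nat[OF p] by simp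
  have "x \<in> {i\<in>{1..N}. p ^ i dvd m} \<longleftrightarrow> x \<in> {1..multiplicity p m}" for x
    using power_dvd_iff_le_multiplicity[of m p x, OF _ p1] m le N by auto
  hence "{i\<in>{1..N}. p ^ i dvd m} = {1..multiplicity p m}" by blast
  thus ?thesis by simp
qed

lemma legendre:
  fixes p n N :: nat
  assumes p: "prime p" and N: "N \<ge> n"
  shows "multiplicity p (fact n) = (\<Sum>i\<in>{1..N}. n div p ^ i)"
  using N
proof (induction n)
  case 0
  then show ?case by simp
next
  case (Suc n)
  have "multiplicity p (fact (Suc n) :: nat) = multiplicity p (Suc n * fact n)"
    by simp
  also have "\<dots> = multiplicity p (Suc n) + multiplicity p (fact n :: nat)"
    by (rule prime_elem_multiplicity_mult_distrib) (use p in auto)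
  also have "multiplicity p (fact n :: nat) = (\<Sum>i\<in>{1..N}. n div p ^ i)"
    using Suc by simp
  also have "multiplicity p (Suc n) = card {i\<in>{1..N}. p ^ i dvd Suc n}"
    using card_pow_dvd[OF p, of "Suc n" N] Suc.prems by simp
  also have "\<dots> = (\<Sum>i\<in>{1..N}. if p ^ i dvd Suc n then 1 else 0)"
    by (simp add: sum.inter_filter[symmetric])
  also have "\<dots> + (\<Sum>i\<in>{1..N}. n div p ^ i) = (\<Sum>i\<in>{1..N}. Suc n div p ^ i)"
  proof -
    have pp: "\<And>i. p ^ i > 0" using prime_gt_0_nat[OF p] by simp
    show ?thesis unfolding sum.distrib[symmetric]
      by (rule sum.cong[OF refl]) (simp add: Suc_div_split[OF pp])
  qed
  finally show ?case .
qed


lemma div_bound2: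
  fixes m d :: nat assumes d: "d > 0" shows "2*m div d \<le> 2*(m div d) + 1"
proof -
  have e: "2*m = 2*(m mod d) + d*(2*(m div d))"
    by (metis add_mult_distrib2 div_mult_mod_eq mult.assoc mult.commute add.commute)
  have "2*m div d = 2*(m mod d) div d + 2*(m div d)"
    using d by (subst e) simp
  moreover have "2*(m mod d) div d < 2"
    using d by (simp add: less_mult_imp_div_less)
  ultimately show ?thesis by linarith
qed

lemma cb_term:
  fixes m d :: nat assumes d: "d > 0"
  shows "2*m div d - 2*(m div d) \<le> (if d \<le> 2*m then 1 else 0)"
proof (cases "d \<le> 2*m")
  case True thus ?thesis using div_bound2[OF d, of m] by simp
next
  case False
  hence "2*m div d = 0" "m div d = 0" by auto
  thus ?thesis by simp
qed

lemma cb_ge: "2 * (m div d) \<le> 2*m div (d::nat)"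
proof (cases "d = 0")
  case False
  have "m div d * d \<le> m" by (rule div_times_less_eq_dividend)
  hence "2*(m div d)*d \<le> 2*m" by simp
  thus ?thesis using False by (simp add: less_eq_div_iff_mult_less_eq)
qed simp

lemma fact_cb: "fact (2*m) = (2*m choose m) * fact m * (fact m :: nat)"
  using binomial_fact_lemma[of m "2*m"] by (simp add: mult_2 algebra_simps)

lemma mult_cb:
  fixes p m :: nat assumes p: "prime p"
  shows "multiplicity p (2*m choose m) \<le> card {i\<in>{1..2*m}. p ^ i \<le> 2*m}"
proof -
  have nz: "(2*m choose m) \<noteq> 0" "(fact m :: nat) \<noteq> 0" by auto
  have "multiplicity p (fact (2*m) :: nat) = multiplicity p (2*m choose m) + 2 * multiplicity p (fact m :: nat)"
    unfolding fact_cb using p nz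
    by (simp add: prime_elem_multiplicity_mult_distrib)
  moreover have "multiplicity p (fact (2*m) :: nat) = (\<Sum>i\<in>{1..2*m}. 2*m div p ^ i)"
    by (rule legendre[OF p]) simp
  moreover have "multiplicity p (fact m :: nat) = (\<Sum>i\<in>{1..2*m}. m div p ^ i)"
    by (rule legendre[OF p]) simp
  ultimately have "multiplicity p (2*m choose m) = (\<Sum>i\<in>{1..2*m}. 2*m div p ^ i) - (\<Sum>i\<in>{1..2*m}. 2*(m div p ^ i))"
    by (simp add: sum_distrib_left)
  also have "\<dots> = (\<Sum>i\<in>{1..2*m}. 2*m div p ^ i - 2*(m div p ^ i))"
    by (rule sum_subtractf_nat[symmetric]) (simp add: cb_ge)
  also have "\<dots> \<le> (\<Sum>i\<in>{1..2*m}. if p ^ i \<le> 2*m then 1 else 0)"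
    by (rule sum_mono, rule cb_term) (use prime_gt_0_nat[OF p] in simp)
  also have "\<dots> = card {i\<in>{1..2*m}. p ^ i \<le> 2*m}"
    by (simp add: sum.inter_filter[symmetric])
  finally show ?thesis .
qed

lemma pow_card_le:
  fixes p m :: nat assumes p: "prime p" and m: "m \<ge> 1"
  shows "p ^ card {i\<in>{1..2*m}. p ^ i \<le> 2*m} \<le> 2*m"
proof (cases "{i\<in>{1..2*m}. p ^ i \<le> 2*m} = {}")
  case True thus ?thesis using m by (subst True) simp
next
  case False
  define S where "S = {i\<in>{1..2*m}. p ^ i \<le> 2*m}"
  have fin: "finite S" unfolding S_def by simp
  define j where "j = Max S"
  have jS: "j \<in> S" unfolding j_def using False fin S_def by (intro Max_in) auto
  have "S \<subseteq> {1..j}" unfolding j_def using fin S_def by (auto intro: Max_ge)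
  hence "card S \<le> j" using card_mono[of "{1..j}" S] by simp
  hence "p ^ card S \<le> p ^ j" using prime_gt_0_nat[OF p] by (intro power_increasing) auto
  also have "p ^ j \<le> 2*m" using jS unfolding S_def by simp
  finally show ?thesis unfolding S_def .
qed

definition pcount :: "nat \<Rightarrow> nat" where
  "pcount x = card {p. prime p \<and> p \<le> x}"

lemma finite_primes_le: "finite {p::nat. prime p \<and> p \<le> x}"
  by (rule finite_subset[of _ "{..x}"]) auto

lemma cb_pos: "(2*m choose m) > 0"
  by simp

lemma prime_factors_cb: "prime_factors (2*m choose m) \<subseteq> {p. prime p \<and> p \<le> 2*m}"
proof
  fix p assume p: "p \<in> prime_factors (2*m choose m)"
  hence pp: "prime p" and "p dvd (2*m choose m)" by auto
  hence "p dvd fact (2*m)" unfolding fact_cb by simp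
  thus "p \<in> {p. prime p \<and> p \<le> 2*m}" using pp prime_dvd_fact_iff by auto
qed

lemma cb_le_pow_pcount:
  assumes m: "m \<ge> 1"
  shows "(2*m choose m) \<le> (2*m) ^ pcount (2*m)"
proof -
  let ?C = "2*m choose m"
  have "?C = (\<Prod>p\<in>prime_factors ?C. p ^ multiplicity p ?C)"
    by (rule prime_factorization_nat) simp
  also have "\<dots> \<le> (\<Prod>p\<in>prime_factors ?C. 2*m)"
  proof (rule prod_mono)
    fix p assume "p \<in> prime_factors ?C"
    hence pp: "prime p" by auto
    have "p ^ multiplicity p ?C \<le> p ^ card {i\<in>{1..2*m}. p ^ i \<le> 2*m}"
      using mult_cb[OF pp, of m] prime_gt_0_nat[OF pp] by (intro power_increasing) auto
    also have "\<dots> \<le> 2*m" by (rule pow_card_le[OF pp m])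
    finally show "0 \<le> p ^ multiplicity p ?C \<and> p ^ multiplicity p ?C \<le> 2*m" by simp
  qed
  also have "\<dots> = (2*m) ^ card (prime_factors ?C)" by simp
  also have "\<dots> \<le> (2*m) ^ pcount (2*m)"
    unfolding pcount_def using m
    by (intro power_increasing card_mono finite_primes_le prime_factors_cb) auto
  finally show ?thesis .
qed

lemma cb_ge_pow2: "2 ^ m \<le> (2*m choose m)"
proof (induction m)
  case 0 thus ?case by simp
next
  case (Suc m)
  have eq: "(2*Suc m choose Suc m) * Suc m = 2*(2*m+1)*(2*m choose m)"
    by (metis (lifting) ext Suc_eq_plus1 Suc_times_binomial_add
      Suc_times_binomial_eq add_Suc_right add_Suc_shift mult.commute
      mult.left_commute mult_2)
  have "2 ^ Suc m * Suc m \<le> 2 * (2*m+1) * 2 ^ m" by simp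
  also have "\<dots> \<le> 2*(2*m+1)*(2*m choose m)" by (rule mult_left_mono) (use Suc in auto)
  also have "\<dots> = (2*Suc m choose Suc m) * Suc m" by (rule eq[symmetric])
  finally show ?case by (metis mult_le_cancel2 zero_less_Suc)
qed

lemma primes_mid_card:
  assumes m: "m \<ge> 1"
  shows "m ^ card {p. prime p \<and> m < p \<and> p \<le> 2*m} \<le> 4 ^ m"
proof -
  let ?C = "2*m choose m"
  let ?P = "{p. prime p \<and> m < p \<and> p \<le> 2*m}"
  have sub: "?P \<subseteq> prime_factors ?C"
  proof
    fix p assume "p \<in> ?P"
    hence pp: "prime p" and mp: "m < p" "p \<le> 2*m" by auto
    have "p dvd fact (2*m)" using pp mp prime_dvd_fact_iff by auto
    hence "p dvd ?C * (fact m * fact m)" unfolding fact_cb by (simp add: mult.assoc)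
    moreover have "\<not> p dvd fact m * fact m"
      using pp mp prime_dvd_fact_iff[OF pp, of m] prime_dvd_mult_iff[OF pp] by auto
    ultimately have "p dvd ?C" using pp prime_dvd_mult_iff by blast
    thus "p \<in> prime_factors ?C" using pp by (simp add: in_prime_factors_iff)
  qed
  have finP: "finite ?P" by (rule finite_subset[OF _ finite_primes_le[of "2*m"]]) auto
  have "m ^ card ?P = (\<Prod>p\<in>?P. m)" by simp
  also have "\<dots> \<le> (\<Prod>p\<in>?P. p ^ multiplicity p ?C)"
  proof (rule prod_mono)
    fix p assume pP: "p \<in> ?P"
    hence "p \<in> prime_factors ?C" using sub by blast
    hence "multiplicity p ?C \<ge> 1" by (simp add: prime_factors_multiplicity)
    hence "p \<le> p ^ multiplicity p ?C" using pP
      using power_increasing[of 1 "multiplicity p ?C" p] pP by auto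
    thus "0 \<le> m \<and> m \<le> p ^ multiplicity p ?C" using pP by auto
  qed
  also have "\<dots> \<le> (\<Prod>p\<in>prime_factors ?C. p ^ multiplicity p ?C)"
    by (rule dvd_imp_le[OF prod_dvd_prod_subset[OF _ sub]]) (use prime_gt_0_nat in_prime_factors_imp_prime in \<open>auto intro!: prod_pos\<close>)
  also have "\<dots> = ?C" by (rule prime_factorization_nat[symmetric]) simp
  also have "\<dots> \<le> 2 ^ (2*m)" by (rule binomial_le_pow2)
  also have "\<dots> = 4 ^ m" by (simp add: power_mult)
  finally show ?thesis .
qed


lemma pcount_mono: "x \<le> y \<Longrightarrow> pcount x \<le> pcount y"
  unfolding pcount_def by (intro card_mono finite_primes_le) auto

lemma pcount_le: "pcount x \<le> x - 1"
proof -
  have "{p::nat. prime p \<and> p \<le> x} \<subseteq> {2..x}" using prime_ge_2_nat by auto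
  hence "pcount x \<le> card {2..x}" unfolding pcount_def by (intro card_mono) auto
  thus ?thesis by simp
qed

lemma pcount_lower:
  assumes x: "x \<ge> 2"
  shows "real x * ln 2 / 4 \<le> real (pcount x) * ln (real x)"
proof -
  define m where "m = x div 2"
  have m1: "m \<ge> 1" and xm: "x \<le> 4*m" and mx: "2*m \<le> x" using x unfolding m_def by auto
  have "2 ^ m \<le> (2*m) ^ pcount (2*m)"
    using cb_ge_pow2[of m] cb_le_pow_pcount[OF m1] by linarith
  hence "(2::real) ^ m \<le> real (2*m) ^ pcount (2*m)"
    by (metis numeral_power_le_of_nat_cancel_iff of_nat_power)
  hence "ln ((2::real) ^ m) \<le> ln (real (2*m) ^ pcount (2*m))"
    by (subst ln_le_cancel_iff) (use m1 in auto)
  moreover have "ln ((2::real) ^ m) = real m * ln 2" by (rule ln_realpow)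
  moreover have "ln (real (2*m) ^ pcount (2*m)) = real (pcount (2*m)) * ln (real (2*m))"
    by (rule ln_realpow)
  ultimately have "real m * ln 2 \<le> real (pcount (2*m)) * ln (real (2*m))" by simp
  also have "\<dots> \<le> real (pcount x) * ln (real x)"
  proof (rule mult_mono)
    show "real (pcount (2*m)) \<le> real (pcount x)" using pcount_mono[OF mx] by simp
    show "ln (real (2*m)) \<le> ln (real x)" using mx m1 by simp
    show "0 \<le> ln (real (2*m))" using m1 by simp
  qed simp
  finally have "real m * ln 2 \<le> real (pcount x) * ln (real x)" .
  moreover have "real x * ln 2 / 4 \<le> real m * ln 2" using xm by simp
  ultimately show ?thesis by linarith
qed

lemma pcount_double:
  assumes m: "m \<ge> 2"
  shows "real (pcount (2*m)) \<le> real (pcount m) + real m * ln 4 / ln (real m)"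
proof -
  let ?P = "{p. prime p \<and> m < p \<and> p \<le> 2*m}"
  have eq: "{p. prime p \<and> p \<le> 2*m} = {p. prime p \<and> p \<le> m} \<union> ?P" by auto
  have finP: "finite ?P" by (rule finite_subset[OF _ finite_primes_le[of "2*m"]]) auto
  have "pcount (2*m) = pcount m + card ?P"
    unfolding pcount_def eq by (rule card_Un_disjoint) (use finP finite_primes_le in auto)
  moreover have "real (card ?P) \<le> real m * ln 4 / ln (real m)"
  proof -
    have "m ^ card ?P \<le> 4 ^ m" using primes_mid_card m by simp
    hence "real m ^ card ?P \<le> (4::real) ^ m"
      by (metis of_nat_le_iff of_nat_numeral of_nat_power)
    hence "ln (real m ^ card ?P) \<le> ln ((4::real) ^ m)"
      by (subst ln_le_cancel_iff) (use m in auto)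
    hence "real (card ?P) * ln (real m) \<le> real m * ln 4"
      using m by (simp add: ln_realpow)
    moreover have "ln (real m) > 0" using m by simp
    ultimately show ?thesis by (simp add: field_simps)
  qed
  ultimately show ?thesis by simp
qed

lemma pcount_Suc: "pcount (Suc x) \<le> pcount x + 1"
proof -
  have "{p. prime p \<and> p \<le> Suc x} \<subseteq> insert (Suc x) {p. prime p \<and> p \<le> x}" by auto
  hence "pcount (Suc x) \<le> card (insert (Suc x) {p. prime p \<and> p \<le> x})"
    unfolding pcount_def by (intro card_mono) (auto intro: finite_primes_le)
  also have "\<dots> \<le> pcount x + 1" unfolding pcount_def
    by (simp add: card_insert_if finite_primes_le)
  finally show ?thesis .
qed

lemma pcount_small:
  fixes eps :: real assumes eps: "eps > 0"
  shows "\<exists>X. \<forall>y\<ge>X. real (pcount y) \<le> eps * real y"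
proof -
  define e where "e = eps / 5"
  have e: "e > 0" using eps unfolding e_def by simp
  define M0 :: nat where "M0 = max 2 (nat \<lceil>max (exp (ln 4 / e)) (1 / e)\<rceil>)"
  have M02: "M0 \<ge> 2" unfolding M0_def by simp
  have M0e: "real M0 \<ge> 1 / e" unfolding M0_def by linarith
  have M0x: "real M0 \<ge> exp (ln 4 / e)" unfolding M0_def by linarith
  have lnM0: "ln (real M0) \<ge> ln 4 / e"
    using M0x by (metis exp_gt_zero ln_exp ln_le_cancel_iff order_less_le_trans)
  have key: "ln 4 / ln (real m) \<le> e" if "m \<ge> M0" for m :: nat
  proof -
    have "ln (real m) \<ge> ln (real M0)" using that M02 by simp
    hence l: "ln (real m) \<ge> ln 4 / e" using lnM0 by linarith
    have pos: "ln 4 / e > 0" using e by simp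
    hence "ln (real m) > 0" using l by linarith
    thus ?thesis using l e by (simp add: field_simps)
  qed
  have claim: "real (pcount y) \<le> 2 * real M0 + 4 * e * real y" for y
  proof (induction y rule: less_induct)
    case (less y)
    show ?case
    proof (cases "y < 2 * M0")
      case True
      have "pcount y \<le> y" using pcount_le[of y] by simp
      hence "real (pcount y) \<le> 2 * real M0" using True by linarith
      moreover have "0 \<le> 4 * e * real y" using e by simp
      ultimately show ?thesis by linarith
    next
      case False
      define m where "m = y div 2"
      have mM: "m \<ge> M0" and ym: "y \<le> 2*m + 1" "2*m \<le> y" and my: "m < y"
        using False M02 unfolding m_def by auto
      have "real (pcount y) \<le> real (pcount (2*m + 1))"
        using pcount_mono[OF ym(1)] by simp
      also have "\<dots> \<le> real (pcount (2*m)) + 1" using pcount_Suc[of "2*m"] by simp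
      also have "\<dots> \<le> real (pcount m) + real m * ln 4 / ln (real m) + 1"
        using pcount_double[of m] mM M02 by simp
      also have "real m * ln 4 / ln (real m) \<le> e * real m"
      proof -
        have "real m * ln 4 / ln (real m) = real m * (ln 4 / ln (real m))" by simp
        also have "\<dots> \<le> real m * e" by (rule mult_left_mono[OF key[OF mM]]) simp
        finally show ?thesis by (simp add: mult.commute)
      qed
      also have "real (pcount m) \<le> 2 * real M0 + 4 * e * real m" using less[OF my] .
      finally have "real (pcount y) \<le> 2 * real M0 + 5 * e * real m + 1" by simp
      moreover have "e * real m \<ge> 1"
      proof -
        have "e * real m \<ge> e * real M0" using mM e by simp
        moreover have "e * real M0 \<ge> 1" using M0e e by (simp add: field_simps)
        ultimately show ?thesis by linarith
      qed
      moreover have "2 * real m \<le> real y" using ym by simp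
      moreover have "4*e*(2*real m) \<le> 4*e*real y"
        by (rule mult_left_mono) (use e ym in auto)
      ultimately show ?thesis by linarith
    qed
  qed
  show ?thesis
  proof (intro exI allI impI)
    fix y :: nat assume y: "y \<ge> nat \<lceil>2 * real M0 / e\<rceil>"
    hence "real y \<ge> 2 * real M0 / e" by linarith
    hence "2 * real M0 \<le> e * real y" using e by (simp add: field_simps)
    with claim[of y] have "real (pcount y) \<le> 5 * e * real y" by linarith
    thus "real (pcount y) \<le> eps * real y" unfolding e_def by simp
  qed
qed

lemma primes_inf: "infinite {p::nat. prime p}"
  using primes_infinite by simp

lemma nth_prime_prime: "prime (nth_prime m)"
  unfolding nth_prime_def using enumerate_in_set[OF primes_inf] by simp

lemma pcount_enum: "pcount (enumerate {p::nat. prime p} j) = Suc j"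
proof -
  let ?S = "{p::nat. prime p}"
  have "{p. prime p \<and> p \<le> enumerate ?S j} = enumerate ?S ` {..j}"
  proof (intro set_eqI iffI)
    fix p assume "p \<in> {p. prime p \<and> p \<le> enumerate ?S j}"
    hence pS: "p \<in> ?S" and pj: "p \<le> enumerate ?S j" by auto
    obtain i where i: "enumerate ?S i = p" using enumerate_Ex[OF primes_inf pS] by blast
    have "i \<le> j" using pj i enumerate_mono_le_iff[OF primes_inf] by metis
    thus "p \<in> enumerate ?S ` {..j}" using i by auto
  next
    fix p assume "p \<in> enumerate ?S ` {..j}"
    then obtain i where "i \<le> j" "p = enumerate ?S i" by auto
    thus "p \<in> {p. prime p \<and> p \<le> enumerate ?S j}"
      using enumerate_in_set[OF primes_inf] enumerate_mono_le_iff[OF primes_inf] by auto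
  qed
  moreover have "card (enumerate ?S ` {..j}) = Suc j"
    using inj_enumerate[OF primes_inf] by (simp add: card_image inj_on_subset)
  ultimately show ?thesis unfolding pcount_def by simp
qed

lemma pcount_nth_prime: "m \<ge> 1 \<Longrightarrow> pcount (nth_prime m) = m"
  unfolding nth_prime_def using pcount_enum[of "m-1"] by simp

lemma nth_prime_gt: "m \<ge> 1 \<Longrightarrow> nth_prime m > m"
  using pcount_nth_prime[of m] pcount_le[of "nth_prime m"] prime_ge_2_nat[OF nth_prime_prime[of m]]
  by linarith



lemma iter_Suc: "iter_prime (Suc k) n = nth_prime (iter_prime k n)"
  unfolding iter_prime_def by simp

lemma iter_ge: "n \<ge> 1 \<Longrightarrow> iter_prime k n \<ge> k + 1"
proof (induction k)
  case 0 thus ?case by (simp add: iter_prime_def)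
next
  case (Suc k)
  hence "iter_prime k n \<ge> 1" by simp
  hence "nth_prime (iter_prime k n) > iter_prime k n" by (rule nth_prime_gt)
  thus ?case using Suc by (simp add: iter_Suc)
qed

lemma iter_step: "n \<ge> 1 \<Longrightarrow> iter_prime k n < iter_prime (Suc k) n"
  using nth_prime_gt[of "iter_prime k n"] iter_ge[of n k] by (simp add: iter_Suc)

lemma iter_smono: "n \<ge> 1 \<Longrightarrow> strict_mono (\<lambda>k. iter_prime k n)"
  by (rule strict_mono_Suc_iff[THEN iffD2]) (simp add: iter_step)

lemma pcount_iter: "n \<ge> 1 \<Longrightarrow> pcount (iter_prime (Suc k) n) = iter_prime k n"
  using pcount_nth_prime[of "iter_prime k n"] iter_ge[of n k] by (simp add: iter_Suc)

lemma PT_count_eq: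
  assumes n: "n \<ge> 1"
  shows "PT_count n x = card {k. 1 \<le> k \<and> real (iter_prime k n) \<le> x}"
proof -
  have "{a \<in> PT_set n. real a \<le> x} = (\<lambda>k. iter_prime k n) ` {k. 1 \<le> k \<and> real (iter_prime k n) \<le> x}"
    unfolding PT_set_def by auto
  moreover have "inj (\<lambda>k. iter_prime k n)"
    using iter_smono[OF n] by (rule strict_mono_imp_inj_on)
  ultimately show ?thesis unfolding PT_count_def
    by (simp add: card_image inj_on_subset)
qed

lemma PT_count_ge:
  assumes n: "n \<ge> 1" and j: "j \<ge> 1" and x: "real (iter_prime j n) \<le> x"
  shows "PT_count n x \<ge> j"
proof -
  have "{1..j} \<subseteq> {k. 1 \<le> k \<and> real (iter_prime k n) \<le> x}"
  proof
    fix k assume k: "k \<in> {1..j}"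
    hence "iter_prime k n \<le> iter_prime j n"
      using strict_mono_less_eq[OF iter_smono[OF n]] by auto
    thus "k \<in> {k. 1 \<le> k \<and> real (iter_prime k n) \<le> x}" using k x by auto
  qed
  moreover have "finite {k. 1 \<le> k \<and> real (iter_prime k n) \<le> x}"
  proof (rule finite_subset)
    show "{k. 1 \<le> k \<and> real (iter_prime k n) \<le> x} \<subseteq> {..nat \<lceil>x\<rceil>}"
    proof
      fix k assume "k \<in> {k. 1 \<le> k \<and> real (iter_prime k n) \<le> x}"
      hence "real k \<le> x" using iter_ge[OF n, of k] by (smt (verit) mem_Collect_eq of_nat_le_iff add_leD1)
      hence "int k \<le> \<lceil>x\<rceil>" by (metis ceiling_mono ceiling_of_nat)
      thus "k \<in> {..nat \<lceil>x\<rceil>}" by auto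
    qed
  qed simp
  ultimately have "card {1..j} \<le> card {k. 1 \<le> k \<and> real (iter_prime k n) \<le> x}"
    by (rule card_mono[rotated])
  thus ?thesis using PT_count_eq[OF n] by simp
qed

lemma PT_upper:
  assumes n: "n \<ge> 1" and M: "M > 1"
  shows "\<exists>k0. \<forall>x\<ge>1. real (PT_count n x) \<le> real k0 + 1 + ln x / ln M"
proof -
  obtain X where X: "\<And>y. y \<ge> X \<Longrightarrow> real (pcount y) \<le> (1/M) * real y"
    using pcount_small[of "1/M"] M by auto
  have stepM: "M * real (iter_prime k n) \<le> real (iter_prime (Suc k) n)" if k: "k \<ge> X" for k
  proof -
    have "iter_prime (Suc k) n \<ge> X" using iter_ge[OF n, of "Suc k"] k by simp
    from X[OF this] have "real (iter_prime k n) \<le> (1/M) * real (iter_prime (Suc k) n)"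
      using pcount_iter[OF n] by simp
    thus ?thesis using M by (simp add: field_simps)
  qed
  have grow: "M ^ (k - X) \<le> real (iter_prime k n)" if "k \<ge> X" for k
    using that
  proof (induction k rule: dec_induct)
    case base thus ?case using iter_ge[OF n, of X] by simp
  next
    case (step k)
    have "M ^ (Suc k - X) = M * M ^ (k - X)" using step.hyps by (simp add: Suc_diff_le)
    also have "\<dots> \<le> M * real (iter_prime k n)" using step.IH M by simp
    also have "\<dots> \<le> real (iter_prime (Suc k) n)" using stepM[of k] step.hyps by simp
    finally show ?case .
  qed
  show ?thesis
  proof (intro exI allI impI)
    fix x :: real assume x: "x \<ge> 1"
    define F where "F = nat \<lfloor>ln x / ln M\<rfloor>"
    have lnM: "ln M > 0" using M by simp
    have "{k. 1 \<le> k \<and> real (iter_prime k n) \<le> x} \<subseteq> {..X + F}"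
    proof
      fix k assume k: "k \<in> {k. 1 \<le> k \<and> real (iter_prime k n) \<le> x}"
      show "k \<in> {..X + F}"
      proof (cases "k \<ge> X")
        case True
        have "M ^ (k - X) \<le> x" using grow[OF True] k by simp
        hence "ln (M ^ (k - X)) \<le> ln x" using M x by (subst ln_le_cancel_iff) auto
        hence "real (k - X) * ln M \<le> ln x" by (simp add: ln_realpow)
        hence "real (k - X) \<le> ln x / ln M" using lnM by (simp add: field_simps)
        hence "k - X \<le> F" unfolding F_def by linarith
        thus ?thesis by simp
      qed simp
    qed
    hence "card {k. 1 \<le> k \<and> real (iter_prime k n) \<le> x} \<le> card {..X + F}"
      by (rule card_mono[rotated]) simp
    hence "real (PT_count n x) \<le> real X + real F + 1" using PT_count_eq[OF n] by simp
    moreover have "real F \<le> ln x / ln M" unfolding F_def using x lnM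
      by (simp add: of_nat_nat)
    ultimately show "real (PT_count n x) \<le> real X + 1 + ln x / ln M" by linarith
  qed
qed



lemma concave_step:
  fixes y r :: real assumes y: "y > 0" and r: "0 < r" "r < 1"
  shows "(y + y powr (1 - r)) powr r \<le> y powr r + 1"
proof -
  define t where "t = y powr (- r)"
  have t: "t \<ge> 0" unfolding t_def by simp
  have "y powr (1 - r) = y * t" unfolding t_def
    using y powr_add[of y 1 "- r"] powr_one[of y] by simp
  hence "y + y powr (1 - r) = y * (1 + t)" by (simp add: algebra_simps)
  hence "(y + y powr (1 - r)) powr r = y powr r * (1 + t) powr r"
    using y t by (simp add: powr_mult)
  also have "(1 + t) powr r \<le> (1 + t) powr 1"
    by (rule powr_mono) (use r t in auto)
  also have "(1 + t) powr 1 = 1 + t" using t by (simp add: powr_one)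
  finally have "(y + y powr (1 - r)) powr r \<le> y powr r * (1 + t)"
    by (simp add: mult_left_mono)
  also have "\<dots> = y powr r + y powr r * y powr (- r)" unfolding t_def by (simp add: algebra_simps)
  also have "y powr r * y powr (- r) = 1" using y by (simp add: powr_add[symmetric])
  finally show ?thesis .
qed

lemma ln_le_half: "y > 0 \<Longrightarrow> ln y \<le> y / (2::real)"
proof -
  assume y: "y > 0"
  have "ln y = ln (y / 2) + ln 2" using y by (simp add: ln_div)
  also have "ln (y / 2) \<le> y / 2 - 1" using y by (intro ln_le_minus_one) simp
  also have "ln (2::real) < 1" by (rule ln_2_less_1)
  finally show ?thesis by simp
qed


lemma PT_lower:
  assumes n: "n \<ge> 1" and r: "0 < r" "r < 1"
  shows "\<exists>B. eventually (\<lambda>x. real (PT_count n x) \<ge> ln x powr r - B) at_top"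
proof -
  define a where "a k = real (iter_prime k n)" for k
  define L where "L k = ln (a k)" for k
  have a_ge: "a k \<ge> real k + 1" for k using iter_ge[OF n, of k] unfolding a_def by simp
  have a_pos: "a k > 0" for k using a_ge[of k] by linarith
  have a2: "a (Suc k) \<ge> 2" for k using a_ge[of "Suc k"] by simp
  have L_nonneg: "L k \<ge> 0" for k unfolding L_def using a_ge[of k] by simp
  have L_pos: "L (Suc k) > 0" for k unfolding L_def using a2[of k] by simp
  have ln2: "ln (2::real) > 0" by simp
  define A where "A = ln 4 - ln (ln (2::real))"
  have A: "A > 0" unfolding A_def using ln_2_less_1 ln2
    by (smt (verit) ln_less_cancel_iff ln_gt_zero_iff ln_le_minus_one)
  have rec1: "L (Suc k) \<le> L k + A + ln (L (Suc k))" for k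
  proof -
    have "real (iter_prime (Suc k) n) * ln 2 / 4 \<le> real (pcount (iter_prime (Suc k) n)) * ln (real (iter_prime (Suc k) n))"
      by (rule pcount_lower) (use a2[of k] in \<open>simp add: a_def\<close>)
    hence "a (Suc k) * ln 2 / 4 \<le> a k * L (Suc k)"
      unfolding a_def L_def using pcount_iter[OF n, of k] by simp
    hence "ln (a (Suc k) * ln 2 / 4) \<le> ln (a k * L (Suc k))"
      using a_pos[of "Suc k"] a_pos[of k] L_pos[of k] ln2 by (subst ln_le_cancel_iff) auto
    moreover have "ln (a (Suc k) * ln 2 / 4) = L (Suc k) - A"
      unfolding L_def A_def using a_pos[of "Suc k"] ln2 by (simp add: ln_mult ln_div)
    moreover have "ln (a k * L (Suc k)) = L k + ln (L (Suc k))"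
      unfolding L_def using a_pos[of k] L_pos[of k] by (simp add: ln_mult L_def)
    ultimately show ?thesis by simp
  qed
  have rec3: "L (Suc k) \<le> L k + (A + ln (2 * L k + 2 * A))" for k
  proof -
    have "ln (L (Suc k)) \<le> L (Suc k) / 2" by (rule ln_le_half[OF L_pos])
    hence "L (Suc k) \<le> 2 * L k + 2 * A" using rec1[of k] by simp
    hence "ln (L (Suc k)) \<le> ln (2 * L k + 2 * A)" using L_pos[of k] by simp
    thus ?thesis using rec1[of k] by simp
  qed
  define d where "d = 1 - r"
  have d: "d > 0" unfolding d_def using r by simp
  have "eventually (\<lambda>y::real. A + ln (2*y+2*A) \<le> y powr d) at_top"
    using d A by real_asymp
  then obtain Y0 where Y0: "\<And>y. y \<ge> Y0 \<Longrightarrow> A + ln (2*y+2*A) \<le> y powr d"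
    by (auto simp: eventually_at_top_linorder)
  define k1 where "k1 = nat \<lceil>exp (max Y0 1)\<rceil>"
  have Lk1: "L k \<ge> max Y0 1" if "k \<ge> k1" for k
  proof -
    have "real k \<ge> exp (max Y0 1)" using that unfolding k1_def by linarith
    hence "a k \<ge> exp (max Y0 1)" using a_ge[of k] by linarith
    hence "ln (a k) \<ge> ln (exp (max Y0 1))" using a_pos[of k] by (subst ln_le_cancel_iff) auto
    thus ?thesis unfolding L_def by simp
  qed
  have rec4: "L (Suc k) \<le> L k + L k powr d" if "k \<ge> k1" for k
    using rec3[of k] Y0[of "L k"] Lk1[OF that] by simp
  have rec5: "L (Suc k) powr r \<le> L k powr r + 1" if "k \<ge> k1" for k
  proof -
    have "L (Suc k) powr r \<le> (L k + L k powr d) powr r"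
      by (rule powr_mono2) (use r L_nonneg rec4[OF that] in auto)
    also have "\<dots> \<le> L k powr r + 1" unfolding d_def
      by (rule concave_step) (use Lk1[OF that] r in auto)
    finally show ?thesis .
  qed
  define B0 where "B0 = L k1 powr r"
  have rec6: "L k powr r \<le> B0 + real (k - k1)" if "k \<ge> k1" for k
    using that
  proof (induction k rule: dec_induct)
    case base thus ?case unfolding B0_def by simp
  next
    case (step k)
    have "L (Suc k) powr r \<le> L k powr r + 1" by (rule rec5[OF step.hyps(1)])
    also have "\<dots> \<le> B0 + real (k - k1) + 1" using step.IH by simp
    also have "\<dots> = B0 + real (Suc k - k1)" using step.hyps(1) by (simp add: Suc_diff_le)
    finally show ?case .
  qed
  have lim: "filterlim (\<lambda>x::real. ln x powr r) at_top at_top" using r by real_asymp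
  have ev: "eventually (\<lambda>x. ln x powr r \<ge> B0 + real k1 + 1 \<and> x \<ge> 1) at_top"
    using filterlim_at_top[THEN iffD1, OF lim, rule_format, of "B0 + real k1 + 1"]
      eventually_ge_at_top[of "1::real"] by (rule eventually_conj)
  show ?thesis
  proof (intro exI[of _ "B0 + 1"], rule eventually_mono[OF ev], elim conjE)
    fix x :: real assume big: "ln x powr r \<ge> B0 + real k1 + 1" and x: "x \<ge> 1"
    define u where "u = ln x"
    have u: "u \<ge> 0" unfolding u_def using x by simp
    define j where "j = nat \<lfloor>u powr r - B0\<rfloor>"
    have pos: "u powr r - B0 \<ge> real k1 + 1" using big unfolding u_def by linarith
    have fl: "\<lfloor>u powr r - B0\<rfloor> \<ge> int k1 + 1" using pos
      by (metis le_floor_iff of_int_1 of_int_add of_int_of_nat_eq)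
    have jf: "real j = real_of_int \<lfloor>u powr r - B0\<rfloor>" unfolding j_def using fl by simp
    have fc: "real_of_int \<lfloor>u powr r - B0\<rfloor> \<le> u powr r - B0"
             "u powr r - B0 < real_of_int \<lfloor>u powr r - B0\<rfloor> + 1"
      using floor_correct[of "u powr r - B0"] by auto
    have j1: "real j \<le> u powr r - B0" "real j \<ge> u powr r - B0 - 1"
      using jf fc by linarith+
    have jk1: "j \<ge> k1 + 1" unfolding j_def using fl by linarith
    have "L j powr r \<le> B0 + real (j - k1)" using rec6[of j] jk1 by simp
    also have "\<dots> \<le> B0 + real j" by simp
    also have "\<dots> \<le> u powr r" using j1 by simp
    finally have Lj: "L j powr r \<le> u powr r" .
    have "L j \<le> u"
    proof (rule ccontr)
      assume "\<not> L j \<le> u"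
      hence "u powr r < L j powr r" using u r by (intro powr_less_mono2) auto
      thus False using Lj by simp
    qed
    hence "a j \<le> x" unfolding L_def u_def using a_pos[of j] x
      by (subst (asm) ln_le_cancel_iff) auto
    hence "PT_count n x \<ge> j" using PT_count_ge[OF n, of j x] jk1 unfolding a_def by simp
    thus "real (PT_count n x) \<ge> ln x powr r - (B0 + 1)" using j1 unfolding u_def by linarith
  qed
qed



lemma PT_smallo:
  assumes n: "n \<ge> 1"
  shows "(\<lambda>x. real (PT_count n x)) \<in> o[at_top](\<lambda>x. ln x)"
proof (rule landau_o.smallI)
  fix c :: real assume c: "c > 0"
  define M where "M = exp (2/c)"
  have M: "M > 1" unfolding M_def using c by simp
  have lnM: "ln M = 2 / c" unfolding M_def by simp
  obtain k0 where k0: "\<And>x. x \<ge> 1 \<Longrightarrow> real (PT_count n x) \<le> real k0 + 1 + ln x / ln M"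
    using PT_upper[OF n M] by blast
  have lim: "filterlim (\<lambda>x::real. c/2 * ln x) at_top at_top" using c by real_asymp
  have ev: "eventually (\<lambda>x. real k0 + 1 \<le> c/2 * ln x \<and> x \<ge> 1) at_top"
    using filterlim_at_top[THEN iffD1, OF lim, rule_format, of "real k0 + 1"]
      eventually_ge_at_top[of "1::real"] by (rule eventually_conj)
  show "\<forall>\<^sub>F x in at_top. norm (real (PT_count n x)) \<le> c * norm (ln x)"
  proof (rule eventually_mono[OF ev], elim conjE)
    fix x :: real assume a: "real k0 + 1 \<le> c/2 * ln x" and x: "x \<ge> 1"
    have "ln x / ln M = c/2 * ln x" unfolding lnM by simp
    hence "real (PT_count n x) \<le> c * ln x" using k0[OF x] a by linarith
    thus "norm (real (PT_count n x)) \<le> c * norm (ln x)" using x by simp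
  qed
qed

lemma PT_omega:
  assumes n: "n \<ge> 1" and c: "0 < c" "c < 1"
  shows "filterlim (\<lambda>x. real (PT_count n x) / (ln x powr c)) at_top at_top"
proof -
  define r where "r = (1 + c) / 2"
  have r: "0 < r" "r < 1" "c < r" unfolding r_def using c by auto
  obtain B where B: "eventually (\<lambda>x. real (PT_count n x) \<ge> ln x powr r - B) at_top"
    using PT_lower[OF n r(1,2)] by blast
  have lim: "filterlim (\<lambda>x::real. (ln x powr r - B) / ln x powr c) at_top at_top"
    using c r by real_asymp
  show ?thesis
  proof (rule filterlim_at_top_mono[OF lim])
    show "eventually (\<lambda>x. (ln x powr r - B) / ln x powr c \<le> real (PT_count n x) / ln x powr c) at_top"
      using B eventually_gt_at_top[of "1::real"]
    proof eventually_elim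
      case (elim x)
      have "ln x powr c > 0" using elim by simp
      thus ?case using elim by (intro divide_right_mono) auto
    qed
  qed
qed

lemma PT_lnln:
  assumes n: "n \<ge> 1"
  shows "(\<lambda>x. ln (real (PT_count n x))) \<sim>[at_top] (\<lambda>x. ln (ln x))"
proof (rule asymp_equivI', rule order_tendstoI)
  fix a :: real assume a: "a < 1"
  define c where "c = (max a 0 + 1) / 2"
  have c: "0 < c" "c < 1" "a < c" unfolding c_def using a by auto
  have ev1: "eventually (\<lambda>x. 1 \<le> real (PT_count n x) / ln x powr c) at_top"
    using filterlim_at_top[THEN iffD1, OF PT_omega[OF n c(1,2)], rule_format, of 1] .
  show "eventually (\<lambda>x. a < ln (real (PT_count n x)) / ln (ln x)) at_top"
    using ev1 eventually_gt_at_top[of "exp 1"]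
  proof eventually_elim
    case (elim x)
    have x1: "ln x > 1" using elim(2)
      by (metis exp_gt_zero ln_exp ln_less_cancel_iff order_less_trans)
    have lp: "ln x powr c > 0" using x1 by simp
    have "ln x powr c \<le> real (PT_count n x)" using elim(1) lp by (simp add: field_simps)
    hence "ln (ln x powr c) \<le> ln (real (PT_count n x))" using lp
      by (metis ln_le_cancel_iff order_less_le_trans)
    hence "c * ln (ln x) \<le> ln (real (PT_count n x))" by simp
    moreover have "ln (ln x) > 0" using x1 by simp
    ultimately have "c \<le> ln (real (PT_count n x)) / ln (ln x)" by (simp add: field_simps)
    thus ?case using c by linarith
  qed
next
  fix a :: real assume a: "a > 1"
  have ev1: "eventually (\<lambda>x. norm (real (PT_count n x)) \<le> (1/2) * norm (ln x)) at_top"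
    using landau_o.smallD[OF PT_smallo[OF n], of "1/2"] by simp
  show "eventually (\<lambda>x. ln (real (PT_count n x)) / ln (ln x) < a) at_top"
    using ev1 eventually_gt_at_top[of "exp 1"]
  proof eventually_elim
    case (elim x)
    have x1: "ln x > 1" using elim(2)
      by (metis exp_gt_zero ln_exp ln_less_cancel_iff order_less_trans)
    have ll: "ln (ln x) > 0" using x1 by simp
    have le: "real (PT_count n x) \<le> ln x / 2" using elim(1) x1 by simp
    show ?case
    proof (cases "PT_count n x = 0")
      case True thus ?thesis using a by simp
    next
      case False
      hence "ln (real (PT_count n x)) \<le> ln (ln x / 2)" using le by simp
      also have "\<dots> < ln (ln x)" using x1 by simp
      finally have "ln (real (PT_count n x)) / ln (ln x) < 1" using ll by simp
      thus ?thesis using a by linarith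
    qed
  qed
qed

theorem corollary6:
  fixes n :: nat and c :: real
  assumes "n \<ge> 1" and "0 < c" and "c < 1"
  shows "(\<lambda>x. real (PT_count n x)) \<in> o[at_top](\<lambda>x. ln x) \<and>
         filterlim (\<lambda>x. real (PT_count n x) / (ln x powr c)) at_top at_top \<and>
         (\<lambda>x. ln (real (PT_count n x))) \<sim>[at_top] (\<lambda>x. ln (ln x))"
  using PT_smallo[OF assms(1)] PT_omega[OF assms] PT_lnln[OF assms(1)] by blast


end
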